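(* Let $n\ge 2$ and let ${\cal K}$ be a strongly connected closed simplicial complex of dimension $n$ of type $\{3,4\}$. Suppose there is an $(n-1)$-face $G$ of ${\cal K}$ such that every $(n-2)$-face $F\subset G$ lies in exactly $3$ $n$-faces. Then ${\cal K}$ is isomorphic to the boundary complex of the $(n+1)$-simplex (all proper nonempty subsets of an $(n+2)$-element set).
   Context: An (abstract) simplicial complex of dimension $n$ is a family of finite nonempty sets closed under taking nonempty subsets and under nonempty intersections, whose maximal members ($n$-faces) all have cardinality $n+1$. It is closed if every $(n-1)$-face lies in exactly two $n$-faces, and strongly connected if any two $n$-faces can be joined by a sequence of $n$-faces in which consecutive ones share an $(n-1)$-face. It is of type $\{3,4\}$ if every $(n-2)$-face lies in exactly $3$ or $4$ $n$-faces. *)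

theory Defs
  imports Main
begin

text \<open>A k-face is a member with k+1 elements.\<close>

definition simplicial_complex :: "nat \<Rightarrow> 'a set set \<Rightarrow> bool" where
  "simplicial_complex n K \<longleftrightarrow>
     (\<forall>S\<in>K. finite S \<and> S \<noteq> {}) \<and>
     (\<forall>S\<in>K. \<forall>T. T \<subseteq> S \<and> T \<noteq> {} \<longrightarrow> T \<in> K) \<and>
     (\<forall>S\<in>K. \<forall>T\<in>K. S \<inter> T \<noteq> {} \<longrightarrow> S \<inter> T \<in> K) \<and>
     (\<forall>S\<in>K. card S \<le> n + 1) \<and>
     (\<forall>S\<in>K. (\<forall>T\<in>K. S \<subseteq> T \<longrightarrow> T = S) \<longrightarrow> card S = n + 1)"

definition facets_containing :: "nat \<Rightarrow> 'a set set \<Rightarrow> 'a set \<Rightarrow> 'a set set" where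
  "facets_containing n K S = {T\<in>K. card T = n + 1 \<and> S \<subseteq> T}"

definition closed_complex :: "nat \<Rightarrow> 'a set set \<Rightarrow> bool" where
  "closed_complex n K \<longleftrightarrow> (\<forall>S\<in>K. card S = n \<longrightarrow> card (facets_containing n K S) = 2)"

definition facet_adjacent :: "nat \<Rightarrow> 'a set set \<Rightarrow> 'a set \<Rightarrow> 'a set \<Rightarrow> bool" where
  "facet_adjacent n K T T' \<longleftrightarrow> T \<in> K \<and> T' \<in> K \<and> card T = n + 1 \<and> card T' = n + 1 \<and>
     (\<exists>S\<in>K. card S = n \<and> S \<subseteq> T \<and> S \<subseteq> T')"

definition strongly_connected :: "nat \<Rightarrow> 'a set set \<Rightarrow> bool" where
  "strongly_connected n K \<longleftrightarrow>
     (\<forall>T\<in>K. \<forall>T'\<in>K. card T = n + 1 \<and> card T' = n + 1 \<longrightarrow> (facet_adjacent n K)\<^sup>*\<^sup>* T T')"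

definition type_34 :: "nat \<Rightarrow> 'a set set \<Rightarrow> bool" where
  "type_34 n K \<longleftrightarrow> (\<forall>S\<in>K. card S = n - 1 \<longrightarrow> card (facets_containing n K S) \<in> {3, 4})"

definition iso_simplex_boundary :: "nat \<Rightarrow> 'a set set \<Rightarrow> bool" where
  "iso_simplex_boundary n K \<longleftrightarrow>
     (\<exists>f :: 'a \<Rightarrow> nat. bij_betw f (\<Union>K) {0..<n+2} \<and>
        (image f) ` K = {S. S \<subseteq> {0..<n+2} \<and> S \<noteq> {} \<and> S \<noteq> {0..<n+2}})"

end

theory Submission
  imports Defs
begin

lemma ins_of_card:
  assumes "finite A" "G \<subseteq> A" "card A = card G + 1"
  shows "\<exists>a. a \<notin> G \<and> A = insert a G"
proof -
  have "card (A - G) = 1" using assms by (simp add: card_Diff_subset finite_subset)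
  then obtain a where a: "A - G = {a}" by (auto simp: card_1_singleton_iff)
  then show ?thesis using assms(2) by blast
qed

lemma adj_step:
  assumes sc: "simplicial_complex n K" and cl: "closed_complex n K"
    and V: "finite V" "card V = n + 2"
    and allin: "\<And>y. y \<in> V \<Longrightarrow> V - {y} \<in> K"
    and x: "x \<in> V"
    and adj: "facet_adjacent n K (V - {x}) T'"
  shows "\<exists>y\<in>V. T' = V - {y}"
proof -
  from adj obtain S where S: "S \<in> K" "card S = n" "S \<subseteq> V - {x}" "S \<subseteq> T'"
    and T': "T' \<in> K" "card T' = n + 1"
    unfolding facet_adjacent_def by blast
  have cVx: "card (V - {x}) = card S + 1" using V x S by simp
  obtain y where y: "y \<notin> S" "V - {x} = insert y S"
    using ins_of_card[OF _ S(3) cVx] V by auto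
  have yV: "y \<in> V" "y \<noteq> x" using y by auto
  have cV1: "\<And>z. z \<in> V \<Longrightarrow> card (V - {z}) = n + 1" using V by simp
  have Sy: "S \<subseteq> V - {y}" using y by auto
  have sub: "{V - {x}, V - {y}} \<subseteq> facets_containing n K S"
    unfolding facets_containing_def using allin x yV S Sy cV1 by auto
  have ne: "V - {x} \<noteq> V - {y}" using x yV by blast
  have fin: "finite (facets_containing n K S)"
  proof -
    have "facets_containing n K S \<subseteq> Pow V"
    proof
      fix T assume T: "T \<in> facets_containing n K S"
      have "card S = n" by fact
      show "T \<in> Pow V"
      proof (rule ccontr)
        assume "T \<notin> Pow V"
        then obtain z where z: "z \<in> T" "z \<notin> V" by auto
        have "S \<subseteq> T" "card T = n+1" "T \<in> K" using T unfolding facets_containing_def by auto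
        have "z \<notin> S" using z S(3) by auto
        have fT: "finite T" using \<open>T \<in> K\<close> sc unfolding simplicial_complex_def by (elim conjE) blast
        have "insert z S \<subseteq> T" using \<open>S \<subseteq> T\<close> z by auto
        moreover have "card (insert z S) = n + 1"
          using \<open>z \<notin> S\<close> S(2) finite_subset[OF \<open>S \<subseteq> T\<close> fT] by simp
        ultimately have zT: "T = insert z S"
          using card_subset_eq[OF fT] \<open>card T = n+1\<close> by metis
        have "{V - {x}, V - {y}, T} \<subseteq> facets_containing n K S"
          using sub T by auto
        moreover have "card {V - {x}, V - {y}, T} = 3"
        proof -
          have "T \<noteq> V - {x}" "T \<noteq> V - {y}" using z by auto
          then show ?thesis using ne by simp
        qed
        moreover have "card (facets_containing n K S) = 2"
          using cl S unfolding closed_complex_def by blast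
        moreover have "finite (facets_containing n K S)"
          using \<open>card (facets_containing n K S) = 2\<close> card_ge_0_finite by (metis zero_less_numeral)
        ultimately show False using card_mono[of "facets_containing n K S" "{V - {x}, V - {y}, T}"] by simp
      qed
    qed
    then show ?thesis using V finite_subset by blast
  qed
  have "card (facets_containing n K S) = 2"
    using cl S unfolding closed_complex_def by blast
  then have eq: "{V - {x}, V - {y}} = facets_containing n K S"
    using card_subset_eq[OF fin sub] ne by simp
  have "T' \<in> facets_containing n K S"
    unfolding facets_containing_def using T' S by auto
  then have "T' \<in> {V - {x}, V - {y}}" using eq by simp
  then have "T' = V - {x} \<or> T' = V - {y}" by simp
  then show ?thesis using x yV(1) by blast
qed

theorem mainTheorem3:
  fixes K :: "'a set set" and n :: nat and G :: "'a set"
  assumes "n \<ge> 2"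
    and "simplicial_complex n K"
    and "closed_complex n K"
    and "strongly_connected n K"
    and "type_34 n K"
    and "G \<in> K" and "card G = n"
    and "\<forall>F\<in>K. F \<subseteq> G \<and> card F = n - 1 \<longrightarrow> card (facets_containing n K F) = 3"
  shows "iso_simplex_boundary n K"
proof -
  note sc = assms(2)
  have fin: "\<And>S. S \<in> K \<Longrightarrow> finite S"
    and subc: "\<And>S T. S \<in> K \<Longrightarrow> T \<subseteq> S \<Longrightarrow> T \<noteq> {} \<Longrightarrow> T \<in> K"
    and cle: "\<And>S. S \<in> K \<Longrightarrow> card S \<le> n + 1"
    and nemp: "\<And>S. S \<in> K \<Longrightarrow> S \<noteq> {}"
    and maxc: "\<And>S. S \<in> K \<Longrightarrow> (\<forall>T\<in>K. S \<subseteq> T \<longrightarrow> T = S) \<Longrightarrow> card S = n + 1"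
  proof -
    note d0 = sc[unfolded simplicial_complex_def]
    note d = d0[THEN conjunct1] d0[THEN conjunct2, THEN conjunct1]
      d0[THEN conjunct2, THEN conjunct2, THEN conjunct2, THEN conjunct1]
      d0[THEN conjunct2, THEN conjunct2, THEN conjunct2, THEN conjunct2]
    show "\<And>S. S \<in> K \<Longrightarrow> finite S" using d(1) by simp
    show "\<And>S T. S \<in> K \<Longrightarrow> T \<subseteq> S \<Longrightarrow> T \<noteq> {} \<Longrightarrow> T \<in> K" using d(2) by simp
    show "\<And>S. S \<in> K \<Longrightarrow> card S \<le> n + 1" using d(3) by simp
    show "\<And>S. S \<in> K \<Longrightarrow> S \<noteq> {}" using d(1) by simp
    show "\<And>S. S \<in> K \<Longrightarrow> (\<forall>T\<in>K. S \<subseteq> T \<longrightarrow> T = S) \<Longrightarrow> card S = n + 1" using d(4) by simp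
  qed
  have fcG: "card (facets_containing n K G) = 2"
    using assms(3,6,7) unfolding closed_complex_def by blast
  then obtain A B where AB: "facets_containing n K G = {A,B}" "A \<noteq> B"
    by (auto simp: card_2_iff)
  have A: "A \<in> K" "card A = n+1" "G \<subseteq> A" and B: "B \<in> K" "card B = n+1" "G \<subseteq> B"
  proof -
    have "A \<in> facets_containing n K G" "B \<in> facets_containing n K G" using AB(1) by simp_all
    then show "A \<in> K" "card A = n+1" "G \<subseteq> A" "B \<in> K" "card B = n+1" "G \<subseteq> B"
      unfolding facets_containing_def by simp_all
  qed
  obtain a where a: "a \<notin> G" "A = insert a G"
    using ins_of_card[of A G] fin A assms(7) by auto
  obtain b where b: "b \<notin> G" "B = insert b G"
    using ins_of_card[of B G] fin B assms(7) by auto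
  have ab: "a \<noteq> b" using AB a b by auto
  have finG: "finite G" using fin assms(6) .
  have key: "insert a (insert b (G - {v})) \<in> K" if v: "v \<in> G" for v
  proof -
    define F where "F = G - {v}"
    have cF: "card F = n - 1" using v finG assms(7) unfolding F_def by simp
    have FG: "F \<subseteq> G" unfolding F_def by auto
    have Fne: "F \<noteq> {}" using cF assms(1) by auto
    have F: "F \<in> K" using subc[OF assms(6) FG Fne] .
    have c3: "card (facets_containing n K F) = 3" using assms(8) F FG cF by blast
    have aF: "a \<notin> F" "b \<notin> F" using a b FG by auto
    have finF: "finite F" using fin F by blast
    have "insert a F \<subseteq> A" "insert b F \<subseteq> B" using a b FG by auto
    then have RA: "insert a F \<in> K" and RB: "insert b F \<in> K"
      using subc[OF A(1)] subc[OF B(1)] by auto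
    have cRA: "card (insert a F) = n" using aF finF cF assms(1) by simp
    have cRB: "card (insert b F) = n" using aF finF cF assms(1) by simp
    have c2A: "card (facets_containing n K (insert a F)) = 2"
      using assms(3) RA cRA unfolding closed_complex_def by blast
    have c2B: "card (facets_containing n K (insert b F)) = 2"
      using assms(3) RB cRB unfolding closed_complex_def by blast
    obtain T1 where T1: "T1 \<in> facets_containing n K (insert a F)" "T1 \<noteq> A"
      using c2A by (auto simp: card_2_iff)
    obtain T2 where T2: "T2 \<in> facets_containing n K (insert b F)" "T2 \<noteq> B"
      using c2B by (auto simp: card_2_iff)
    have T1': "T1 \<in> K" "card T1 = n+1" "insert a F \<subseteq> T1"
      using T1 unfolding facets_containing_def by auto
    have T2': "T2 \<in> K" "card T2 = n+1" "insert b F \<subseteq> T2"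
      using T2 unfolding facets_containing_def by auto
    have T1B: "T1 \<noteq> B" using T1' b a ab by auto
    have T2A: "T2 \<noteq> A" using T2' b a ab by auto
    have sub4: "{A, B, T1, T2} \<subseteq> facets_containing n K F"
      using A B T1' T2' FG unfolding facets_containing_def by auto
    have fin3: "finite (facets_containing n K F)" by (rule card_ge_0_finite) (simp add: c3)
    have "T1 = T2"
    proof (rule ccontr)
      assume ne: "T1 \<noteq> T2"
      have "card {A, B, T1, T2} = 4" using ne AB(2) T1(2) T2(2) T1B T2A by auto
      then show False using card_mono[OF fin3 sub4] c3 by simp
    qed
    then have sub: "insert a (insert b F) \<subseteq> T1" using T1' T2' by auto
    have "card (insert a (insert b F)) = n + 1"
      using aF ab finF cF assms(1) by simp
    then have "insert a (insert b F) = T1"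
      using card_subset_eq[OF fin[OF T1'(1)] sub] T1'(2) by simp
    then show ?thesis using T1'(1) unfolding F_def by simp
  qed
  define V where "V = insert a (insert b G)"
  have finV: "finite V" using finG unfolding V_def by simp
  have cardV: "card V = n + 2" using finG a b ab assms(7) unfolding V_def by simp
  have allin: "V - {y} \<in> K" if y: "y \<in> V" for y
  proof -
    consider "y = a" | "y = b" | "y \<in> G" using y unfolding V_def by blast
    then show ?thesis
    proof cases
      case 1
      then have "V - {y} = B" using a b ab unfolding V_def by auto
      then show ?thesis using B by simp
    next
      case 2
      then have "V - {y} = A" using a b ab unfolding V_def by auto
      then show ?thesis using A by simp
    next
      case 3
      then have "V - {y} = insert a (insert b (G - {y}))" using a b unfolding V_def by auto
      then show ?thesis using key[OF 3] by simp
    qed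
  qed
  have bV: "b \<in> V" unfolding V_def by simp
  have cVb: "card (V - {b}) = n + 1" using bV finV cardV by simp
  have facets: "\<exists>y\<in>V. T = V - {y}" if T: "T \<in> K" "card T = n+1" for T
  proof -
    have "(facet_adjacent n K)\<^sup>*\<^sup>* (V - {b}) T"
      using assms(4) allin[OF bV] cVb T unfolding strongly_connected_def by blast
    then show ?thesis
    proof (induction rule: rtranclp_induct)
      case base
      then show ?case using bV by blast
    next
      case (step T1 T2)
      then obtain x where "x \<in> V" "T1 = V - {x}" by blast
      then show ?case using adj_step[OF sc assms(3) finV cardV allin] step(2) by blast
    qed
  qed
  have Keq: "K = {S. S \<subseteq> V \<and> S \<noteq> {} \<and> S \<noteq> V}"
  proof (intro set_eqI iffI)
    fix S assume S: "S \<in> K"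
    define C where "C = {T. T \<in> K \<and> S \<subseteq> T}"
    have "card ` C \<subseteq> {..n+1}" using cle unfolding C_def by auto
    then have finC: "finite (card ` C)" using finite_subset by blast
    have SC: "S \<in> C" using S unfolding C_def by simp
    define m where "m = Max (card ` C)"
    have "m \<in> card ` C" unfolding m_def using finC SC Max_in by blast
    then obtain T where TC: "T \<in> C" "card T = m" by blast
    have maxT: "\<forall>T'\<in>K. T \<subseteq> T' \<longrightarrow> T' = T"
    proof (intro ballI impI)
      fix T' assume T': "T' \<in> K" "T \<subseteq> T'"
      then have "T' \<in> C" using TC unfolding C_def by auto
      then have "card T' \<le> card T" using TC finC unfolding m_def by simp
      then show "T' = T" using card_seteq[OF fin[OF T'(1)] T'(2)] by simp
    qed
    have TK: "T \<in> K" "S \<subseteq> T" using TC unfolding C_def by auto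
    have "card T = n + 1" using maxc[OF TK(1) maxT] .
    then obtain y where y: "y \<in> V" "T = V - {y}" using facets TK by blast
    then show "S \<in> {S. S \<subseteq> V \<and> S \<noteq> {} \<and> S \<noteq> V}" using TK nemp[OF S] by auto
  next
    fix S assume S: "S \<in> {S. S \<subseteq> V \<and> S \<noteq> {} \<and> S \<noteq> V}"
    then obtain y where y: "y \<in> V" "y \<notin> S" by auto
    then have "S \<subseteq> V - {y}" using S by auto
    then show "S \<in> K" using subc[OF allin[OF y(1)]] S by auto
  qed
  obtain f :: "'a \<Rightarrow> nat" where f: "bij_betw f V {0..<n+2}"
    using finite_same_card_bij[OF finV, of "{0..<n+2}"] cardV by auto
  have UK: "\<Union>K = V"
  proof
    show "\<Union>K \<subseteq> V" using Keq by auto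
  next
    show "V \<subseteq> \<Union>K"
    proof
      fix x assume x: "x \<in> V"
      have "{x} \<noteq> V" using cardV assms(1) by auto
      then have "{x} \<in> K" using Keq x by auto
      then show "x \<in> \<Union>K" by auto
    qed
  qed
  have inj: "inj_on f V" and surj: "f ` V = {0..<n+2}"
    using f by (auto simp: bij_betw_def)
  have img: "(image f) ` K = {S. S \<subseteq> {0..<n+2} \<and> S \<noteq> {} \<and> S \<noteq> {0..<n+2}}"
  proof (intro set_eqI iffI)
    fix S' assume "S' \<in> (image f) ` K"
    then obtain S where S: "S \<subseteq> V" "S \<noteq> {}" "S \<noteq> V" "S' = f ` S" using Keq by auto
    have "f ` S \<noteq> f ` V" using inj_on_image_eq_iff[OF inj S(1)] S(3) by auto
    then show "S' \<in> {S. S \<subseteq> {0..<n+2} \<and> S \<noteq> {} \<and> S \<noteq> {0..<n+2}}"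
      using S surj by auto
  next
    fix S' assume S': "S' \<in> {S. S \<subseteq> {0..<n+2} \<and> S \<noteq> {} \<and> S \<noteq> {0..<n+2}}"
    define S where "S = {x\<in>V. f x \<in> S'}"
    have fS: "f ` S = S'" using S' surj unfolding S_def by auto
    have "S \<subseteq> V" unfolding S_def by auto
    moreover have "S \<noteq> {}" using fS S' by auto
    moreover have "S \<noteq> V" using fS S' surj by auto
    ultimately have "S \<in> K" using Keq by auto
    then show "S' \<in> (image f) ` K" using fS by auto
  qed
  show ?thesis unfolding iso_simplex_boundary_def using f img UK by auto
qed

end
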